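(* Let $\alpha>0$ and $0\le m<s<M$. If $f_n\in\mathcal{F}(m,M,s)$ for $n=1,2,\dots$ and $f_n\to f$ a.e. on $[-\pi,\pi]$, then $u_{f_n}\to u_f$ uniformly on $[-\pi,\pi]$. Moreover, there is a subsequence $(f_{n_k})$ with $\lim_{k\to\infty}\operatorname{osc}(u_{f_{n_k}})=\operatorname{osc}(u_f)$.
   Context: Robin problem: for $\alpha>0$ and $f\in L^1[-\pi,\pi]$, find $u\in C^1[-\pi,\pi]$ with $u'$ absolutely continuous on $[-\pi,\pi]$, $-u''=f$ a.e. on $(-\pi,\pi)$, and $-u'(-\pi)+\alpha u(-\pi)=u'(\pi)+\alpha u(\pi)=0$. It has a unique solution $u_f(x)=\int_{-\pi}^{\pi}G(x,y)f(y)\,dy$, where $G(x,y)=-\tfrac12 c_\alpha xy-\tfrac12|x-y|+\tfrac{1}{2c_\alpha}$ and $c_\alpha=\alpha/(1+\alpha\pi)$. For $0\le m<s<M$, $\mathcal{F}(m,M,s)$ is the set of $f\in L^1[-\pi,\pi]$ with $m\le f\le M$ and $\|f\|_{L^1}=2\pi s$. $\operatorname{osc}(u)=\max_{[-\pi,\pi]}u-\min_{[-\pi,\pi]}u$. *)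

theory Defs
  imports "HOL-Analysis.Analysis"
begin

definition c_alpha :: "real \<Rightarrow> real" where
  "c_alpha \<alpha> = \<alpha> / (1 + \<alpha> * pi)"

definition green :: "real \<Rightarrow> real \<Rightarrow> real \<Rightarrow> real" where
  "green \<alpha> x y = - (1/2) * c_alpha \<alpha> * x * y - (1/2) * \<bar>x - y\<bar> + 1 / (2 * c_alpha \<alpha>)"

text \<open>The solution u_f of the Robin problem, given by the Green function representation.\<close>
definition u_sol :: "real \<Rightarrow> (real \<Rightarrow> real) \<Rightarrow> real \<Rightarrow> real" where
  "u_sol \<alpha> f x = (LINT y:{-pi..pi}|lebesgue. green \<alpha> x y * f y)"

definition Fam :: "real \<Rightarrow> real \<Rightarrow> real \<Rightarrow> (real \<Rightarrow> real) set" where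
  "Fam m M s = {f. set_integrable lebesgue {-pi..pi} f
      \<and> (AE x in lebesgue. x \<in> {-pi..pi} \<longrightarrow> m \<le> f x \<and> f x \<le> M)
      \<and> (LINT x:{-pi..pi}|lebesgue. \<bar>f x\<bar>) = 2 * pi * s}"

definition osc :: "(real \<Rightarrow> real) \<Rightarrow> real" where
  "osc u = Sup (u ` {-pi..pi}) - Inf (u ` {-pi..pi})"

end

theory Submission
  imports Defs
begin

lemma c_pos: "\<alpha> > 0 \<Longrightarrow> c_alpha \<alpha> > 0" unfolding c_alpha_def by (simp add: add_pos_pos)

definition Kb :: "real \<Rightarrow> real" where
  "Kb \<alpha> = c_alpha \<alpha> * pi^2/2 + pi + 1/(2*c_alpha \<alpha>)"

lemma green_meas: "(\<lambda>y. green \<alpha> x y) \<in> borel_measurable lebesgue"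
  unfolding green_def by (intro measurable_completion) measurable

lemma green_bound:
  assumes "\<alpha>>0" "x \<in> {-pi..pi}" "y \<in> {-pi..pi}" shows "\<bar>green \<alpha> x y\<bar> \<le> Kb \<alpha>"
proof -
  have c: "c_alpha \<alpha> > 0" using c_pos assms by simp
  have xy: "\<bar>x*y\<bar> \<le> pi^2" using assms unfolding abs_mult power2_eq_square by (intro mult_mono) auto
  have "\<bar>x - y\<bar> \<le> 2*pi" using assms by auto
  moreover have "\<bar>c_alpha \<alpha> * x * y\<bar> \<le> c_alpha \<alpha> * pi^2" using xy c by (simp add: abs_mult mult.assoc)
  moreover have "1/(2*c_alpha \<alpha>) > 0" using c by simp
  moreover have "green \<alpha> x y = - (1/2) * (c_alpha \<alpha> * x * y) - (1/2) * \<bar>x - y\<bar> + 1 / (2 * c_alpha \<alpha>)"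
    unfolding green_def by simp
  moreover have "\<And>A B C Q g::real. \<bar>B\<bar> \<le> 2*pi \<Longrightarrow> \<bar>A\<bar> \<le> Q \<Longrightarrow> C>0 \<Longrightarrow> g = -(1/2)*A - 1/2*\<bar>B\<bar> + C \<Longrightarrow> \<bar>g\<bar> \<le> Q/2 + pi + C"
    by linarith
  ultimately have "\<bar>green \<alpha> x y\<bar> \<le> (c_alpha \<alpha> * pi^2)/2 + pi + 1/(2*c_alpha \<alpha>)" by blast
  then show ?thesis unfolding Kb_def by simp
qed

lemma u_repr:
  fixes g :: "real \<Rightarrow> real"
  assumes a: "\<alpha> > 0" and x: "x \<in> {-pi..pi}"
    and meas: "(\<lambda>y. indicator {-pi..pi} y * g y) \<in> borel_measurable lebesgue"
    and bd: "AE y in lebesgue. \<bar>indicator {-pi..pi} y * g y\<bar> \<le> B * indicator {-pi..pi} y"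
  shows "integrable lebesgue (\<lambda>y. green \<alpha> x y * (indicator {-pi..pi} y * g y))"
    and "u_sol \<alpha> g x = integral\<^sup>L lebesgue (\<lambda>y. green \<alpha> x y * (indicator {-pi..pi} y * g y))"
proof -
  show "integrable lebesgue (\<lambda>y. green \<alpha> x y * (indicator {-pi..pi} y * g y))"
  proof -
    have i: "integrable lebesgue (\<lambda>y. Kb \<alpha> * B * indicator {-pi..pi} y)" by simp
    have mm: "(\<lambda>y. green \<alpha> x y * (indicator {-pi..pi} y * g y)) \<in> borel_measurable lebesgue"
      using green_meas meas by measurable
    have ae: "AE y in lebesgue. norm (green \<alpha> x y * (indicator {-pi..pi} y * g y)) \<le> norm (Kb \<alpha> * B * indicator {-pi..pi} y)"
      using bd
    proof eventually_elim
      case (elim y)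
      show ?case
      proof (cases "y \<in> {-pi..pi}")
        case True
        have "\<bar>green \<alpha> x y\<bar> \<le> Kb \<alpha>" using green_bound a x True by blast
        then have "\<bar>green \<alpha> x y\<bar> * \<bar>indicator {-pi..pi} y * g y\<bar> \<le> Kb \<alpha> * (B * indicator {-pi..pi} y)"
          using elim by (intro mult_mono) auto
        then have "\<bar>green \<alpha> x y * (indicator {-pi..pi} y * g y)\<bar> \<le> Kb \<alpha> * B * indicator {-pi..pi} y"
          by (simp add: abs_mult mult.assoc)
        then show ?thesis by (simp only: real_norm_def)
      qed simp
    qed
    show ?thesis by (rule Bochner_Integration.integrable_bound[OF i mm ae])
  qed
  show "u_sol \<alpha> g x = integral\<^sup>L lebesgue (\<lambda>y. green \<alpha> x y * (indicator {-pi..pi} y * g y))"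
    unfolding u_sol_def set_lebesgue_integral_def by (simp add: ac_simps)
qed

lemma sup_close:
  fixes f g :: "real \<Rightarrow> real"
  assumes "S \<noteq> {}" "bdd_above (g ` S)" "\<And>x. x \<in> S \<Longrightarrow> \<bar>f x - g x\<bar> \<le> d"
  shows "\<bar>Sup (f ` S) - Sup (g ` S)\<bar> \<le> d"
proof -
  have bf: "bdd_above (f ` S)"
  proof -
    obtain b where "\<And>x. x \<in> S \<Longrightarrow> g x \<le> b" using assms(2) by (auto simp: bdd_above_def)
    then have "\<And>x. x \<in> S \<Longrightarrow> f x \<le> b + d" using assms(3) by (smt (verit))
    then show ?thesis by (auto simp: bdd_above_def)
  qed
  have "Sup (f ` S) \<le> Sup (g ` S) + d"
  proof (rule cSUP_least[OF assms(1)])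
    fix x assume "x \<in> S"
    then have "g x \<le> Sup (g ` S)" using assms(2) by (simp add: cSUP_upper)
    then show "f x \<le> Sup (g ` S) + d" using assms(3)[OF \<open>x \<in> S\<close>] by linarith
  qed
  moreover have "Sup (g ` S) \<le> Sup (f ` S) + d"
  proof (rule cSUP_least[OF assms(1)])
    fix x assume "x \<in> S"
    then have "f x \<le> Sup (f ` S)" using bf by (simp add: cSUP_upper)
    then show "g x \<le> Sup (f ` S) + d" using assms(3)[OF \<open>x \<in> S\<close>] by linarith
  qed
  ultimately show ?thesis by linarith
qed

lemma inf_close:
  fixes f g :: "real \<Rightarrow> real"
  assumes "S \<noteq> {}" "bdd_below (g ` S)" "\<And>x. x \<in> S \<Longrightarrow> \<bar>f x - g x\<bar> \<le> d"
  shows "\<bar>Inf (f ` S) - Inf (g ` S)\<bar> \<le> d"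
proof -
  have bf: "bdd_below (f ` S)"
  proof -
    obtain b where "\<And>x. x \<in> S \<Longrightarrow> b \<le> g x" using assms(2) by (auto simp: bdd_below_def)
    then have "\<And>x. x \<in> S \<Longrightarrow> b - d \<le> f x" using assms(3) by (smt (verit))
    then show ?thesis by (auto simp: bdd_below_def)
  qed
  have "Inf (g ` S) - d \<le> Inf (f ` S)"
  proof (rule cINF_greatest[OF assms(1)])
    fix x assume "x \<in> S"
    then have "Inf (g ` S) \<le> g x" using assms(2) by (simp add: cINF_lower)
    then show "Inf (g ` S) - d \<le> f x" using assms(3)[OF \<open>x \<in> S\<close>] by linarith
  qed
  moreover have "Inf (f ` S) - d \<le> Inf (g ` S)"
  proof (rule cINF_greatest[OF assms(1)])
    fix x assume "x \<in> S"
    then have "Inf (f ` S) \<le> f x" using bf by (simp add: cINF_lower)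
    then show "Inf (f ` S) - d \<le> g x" using assms(3)[OF \<open>x \<in> S\<close>] by linarith
  qed
  ultimately show ?thesis by linarith
qed

theorem lemma4:
  fixes \<alpha> m M s :: real and fn :: "nat \<Rightarrow> real \<Rightarrow> real" and f :: "real \<Rightarrow> real"
  assumes "\<alpha> > 0" and "0 \<le> m" and "m < s" and "s < M"
    and "\<And>n. fn n \<in> Fam m M s"
    and "AE x in lebesgue. x \<in> {-pi..pi} \<longrightarrow> (\<lambda>n. fn n x) \<longlonglongrightarrow> f x"
  shows "uniform_limit {-pi..pi} (\<lambda>n. u_sol \<alpha> (fn n)) (u_sol \<alpha> f) sequentially
    \<and> (\<exists>r. strict_mono r \<and> (\<lambda>k. osc (u_sol \<alpha> (fn (r k)))) \<longlonglongrightarrow> osc (u_sol \<alpha> f))"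
proof -
  define S where "S = {-pi..pi::real}"
  define G where "G n y = indicator S y * fn n y" for n y
  define F where "F y = indicator S y * f y" for y
  have Gm: "G n \<in> borel_measurable lebesgue" for n
  proof -
    have "set_integrable lebesgue S (fn n)" using assms(5)[of n] unfolding Fam_def S_def by blast
    then have "integrable lebesgue (\<lambda>y. indicator S y *\<^sub>R fn n y)" unfolding set_integrable_def .
    then show ?thesis unfolding G_def by (simp add: borel_measurable_integrable)
  qed
  have bnds: "AE y in lebesgue. \<forall>n. y \<in> S \<longrightarrow> m \<le> fn n y \<and> fn n y \<le> M"
  proof -
    have "AE y in lebesgue. \<forall>n. y \<in> S \<longrightarrow> m \<le> fn n y \<and> fn n y \<le> M"
      unfolding AE_all_countable using assms(5) unfolding Fam_def S_def by blast
    then show ?thesis by eventually_elim blast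
  qed
  have AEG: "AE y in lebesgue. (\<lambda>n. G n y) \<longlonglongrightarrow> F y"
    using assms(6) unfolding S_def[symmetric]
  proof eventually_elim
    case (elim y)
    then show ?case unfolding G_def F_def by (cases "y \<in> S") auto
  qed
  have Fm: "F \<in> borel_measurable lebesgue"
  proof (rule borel_measurable_AE[OF borel_measurable_lim_metric[OF Gm]])
    show "AE y in lebesgue. lim (\<lambda>n. G n y) = F y" using AEG by eventually_elim (rule limI)
  qed
  have Fb: "AE y in lebesgue. \<bar>F y\<bar> \<le> M * indicator S y"
    using AEG bnds
  proof eventually_elim
    case (elim y)
    show ?case
    proof (cases "y \<in> S")
      case True
      then have l: "(\<lambda>n. fn n y) \<longlonglongrightarrow> f y" and g: "\<And>n. m \<le> fn n y \<and> fn n y \<le> M"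
        using elim unfolding G_def F_def by auto
      have "m \<le> f y" by (rule LIMSEQ_le_const[OF l]) (use g in auto)
      moreover have "f y \<le> M" by (rule LIMSEQ_le_const2[OF l]) (use g in auto)
      ultimately show ?thesis using True assms(2) unfolding F_def by auto
    qed (simp add: F_def)
  qed
  have Gb: "AE y in lebesgue. \<bar>G n y\<bar> \<le> M * indicator S y" for n
    using bnds
  proof eventually_elim
    case (elim y)
    show ?case
    proof (cases "y \<in> S")
      case True
      then have "m \<le> fn n y \<and> fn n y \<le> M" using elim by blast
      then show ?thesis using True assms(2) unfolding G_def by auto
    qed (simp add: G_def)
  qed
  define h where "h n y = \<bar>G n y - F y\<bar>" for n y
  have hm: "h n \<in> borel_measurable lebesgue" for n unfolding h_def using Gm Fm by measurable
  have hconv: "integrable lebesgue (h n)" "(\<lambda>n. integral\<^sup>L lebesgue (h n)) \<longlonglongrightarrow> integral\<^sup>L lebesgue (\<lambda>y. 0::real)" for n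
  proof -
    have w: "integrable lebesgue (\<lambda>y. 2 * M * indicator S y :: real)" unfolding S_def by simp
    have lim: "AE y in lebesgue. (\<lambda>n. h n y) \<longlonglongrightarrow> 0"
      using AEG
    proof eventually_elim
      case (elim y)
      then have "(\<lambda>n. G n y - F y) \<longlonglongrightarrow> 0" by (simp add: LIM_zero)
      then show ?case unfolding h_def by (simp add: tendsto_rabs_zero)
    qed
    have bd: "AE y in lebesgue. norm (h n y) \<le> 2 * M * indicator S y" for n
      using Gb[of n] Fb by eventually_elim (auto simp: h_def)
    have fm: "(\<lambda>y. 0::real) \<in> borel_measurable lebesgue" by simp
    show "integrable lebesgue (h n)"
      using integrable_dominated_convergence2[OF fm hm w lim bd] by simp
    show "(\<lambda>n. integral\<^sup>L lebesgue (h n)) \<longlonglongrightarrow> integral\<^sup>L lebesgue (\<lambda>y. 0::real)"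
      using integral_dominated_convergence[OF fm hm w lim bd] by simp
  qed
  have Gm': "(\<lambda>y. indicator {-pi..pi} y * fn n y) \<in> borel_measurable lebesgue" for n
    using Gm[of n] unfolding G_def[abs_def] S_def by simp
  have Gb': "AE y in lebesgue. \<bar>indicator {-pi..pi} y * fn n y\<bar> \<le> M * indicator {-pi..pi} y" for n
    using Gb[of n] unfolding G_def S_def by simp
  have Fm': "(\<lambda>y. indicator {-pi..pi} y * f y) \<in> borel_measurable lebesgue"
    using Fm unfolding F_def[abs_def] S_def by simp
  have Fb': "AE y in lebesgue. \<bar>indicator {-pi..pi} y * f y\<bar> \<le> M * indicator {-pi..pi} y"
    using Fb unfolding F_def S_def by simp
  have GR: "integrable lebesgue (\<lambda>y. green \<alpha> x y * G n y)"
    "u_sol \<alpha> (fn n) x = integral\<^sup>L lebesgue (\<lambda>y. green \<alpha> x y * G n y)" if "x \<in> {-pi..pi}" for x n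
    using u_repr[OF assms(1) that Gm' Gb'] unfolding G_def S_def by simp_all
  have FR: "integrable lebesgue (\<lambda>y. green \<alpha> x y * F y)"
    "u_sol \<alpha> f x = integral\<^sup>L lebesgue (\<lambda>y. green \<alpha> x y * F y)" if "x \<in> {-pi..pi}" for x
    using u_repr[OF assms(1) that Fm' Fb'] unfolding F_def S_def by simp_all
  define d where "d n = Kb \<alpha> * integral\<^sup>L lebesgue (h n)" for n
  have d0: "d \<longlonglongrightarrow> 0"
    unfolding d_def using tendsto_mult_left[OF hconv(2), of "Kb \<alpha>"] by simp
  have close: "\<bar>u_sol \<alpha> (fn n) x - u_sol \<alpha> f x\<bar> \<le> d n" if x: "x \<in> S" for n x
  proof -
    have x': "x \<in> {-pi..pi}" using x S_def by simp
    note rG = GR[OF x']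
    note rF = FR[OF x']
    have "u_sol \<alpha> (fn n) x - u_sol \<alpha> f x = integral\<^sup>L lebesgue (\<lambda>y. green \<alpha> x y * G n y - green \<alpha> x y * F y)"
      using rG rF by simp
    also have "\<dots> = integral\<^sup>L lebesgue (\<lambda>y. green \<alpha> x y * (G n y - F y))"
      by (simp add: right_diff_distrib)
    finally have eq: "u_sol \<alpha> (fn n) x - u_sol \<alpha> f x = integral\<^sup>L lebesgue (\<lambda>y. green \<alpha> x y * (G n y - F y))" .
    have "\<bar>integral\<^sup>L lebesgue (\<lambda>y. green \<alpha> x y * (G n y - F y))\<bar> \<le> integral\<^sup>L lebesgue (\<lambda>y. Kb \<alpha> * h n y)"
    proof (rule integral_abs_bound_integral)
      show "integrable lebesgue (\<lambda>y. green \<alpha> x y * (G n y - F y))"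
        using Bochner_Integration.integrable_diff[OF rG(1) rF(1)] by (simp add: right_diff_distrib)
      show "integrable lebesgue (\<lambda>y. Kb \<alpha> * h n y)" using hconv(1) by simp
      fix y
      show "\<bar>green \<alpha> x y * (G n y - F y)\<bar> \<le> Kb \<alpha> * h n y"
      proof (cases "y \<in> S")
        case True
        then have "\<bar>green \<alpha> x y\<bar> \<le> Kb \<alpha>" using green_bound[OF assms(1) x'] S_def by blast
        then show ?thesis unfolding h_def abs_mult by (intro mult_right_mono) auto
      next
        case False
        then show ?thesis using green_bound[OF assms(1) x' x'] unfolding h_def G_def F_def by simp
      qed
    qed
    then show ?thesis using eq unfolding d_def by simp
  qed
  have ubd: "\<bar>u_sol \<alpha> f x\<bar> \<le> Kb \<alpha> * integral\<^sup>L lebesgue (\<lambda>y. M * indicator S y)" if x: "x \<in> S" for x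
  proof -
    have x': "x \<in> {-pi..pi}" using x S_def by simp
    note rF = FR[OF x']
    have "\<bar>integral\<^sup>L lebesgue (\<lambda>y. green \<alpha> x y * F y)\<bar> \<le> integral\<^sup>L lebesgue (\<lambda>y. \<bar>green \<alpha> x y * F y\<bar>)"
      using integral_norm_bound[of lebesgue "\<lambda>y. green \<alpha> x y * F y"] by simp
    also have "\<dots> \<le> integral\<^sup>L lebesgue (\<lambda>y. Kb \<alpha> * (M * indicator S y))"
    proof (rule integral_mono_AE)
      show "integrable lebesgue (\<lambda>y. \<bar>green \<alpha> x y * F y\<bar>)" using rF(1) by simp
      show "integrable lebesgue (\<lambda>y. Kb \<alpha> * (M * indicator S y))" unfolding S_def by simp
      show "AE y in lebesgue. \<bar>green \<alpha> x y * F y\<bar> \<le> Kb \<alpha> * (M * indicator S y)"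
        using Fb
      proof eventually_elim
        case (elim y)
        show ?case
        proof (cases "y \<in> S")
          case True
          then have "\<bar>green \<alpha> x y\<bar> \<le> Kb \<alpha>" using green_bound[OF assms(1) x'] S_def by blast
          then show ?thesis unfolding abs_mult using elim by (intro mult_mono) auto
        qed (simp add: F_def)
      qed
    qed
    finally have "\<bar>integral\<^sup>L lebesgue (\<lambda>y. green \<alpha> x y * F y)\<bar> \<le> Kb \<alpha> * integral\<^sup>L lebesgue (\<lambda>y. M * indicator S y)"
      by simp
    then show ?thesis using rF(2) by simp
  qed
  have Sne: "S \<noteq> {}" unfolding S_def by simp
  define Bd where "Bd = Kb \<alpha> * integral\<^sup>L lebesgue (\<lambda>y. M * indicator S y)"
  have bdd1: "bdd_above (u_sol \<alpha> f ` S)"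
    unfolding bdd_above_def
  proof (intro exI ballI)
    fix z assume "z \<in> u_sol \<alpha> f ` S"
    then show "z \<le> Bd" using ubd unfolding Bd_def by (auto simp: abs_le_iff)
  qed
  have bdd2: "bdd_below (u_sol \<alpha> f ` S)"
    unfolding bdd_below_def
  proof (intro exI ballI)
    fix z assume "z \<in> u_sol \<alpha> f ` S"
    then show "- Bd \<le> z" using ubd unfolding Bd_def by (force simp: abs_le_iff)
  qed
  note bdd = bdd1 bdd2
  have unif: "uniform_limit S (\<lambda>n. u_sol \<alpha> (fn n)) (u_sol \<alpha> f) sequentially"
  proof (rule uniform_limitI)
    fix e :: real assume "e > 0"
    then have "eventually (\<lambda>n. d n < e) sequentially" using order_tendstoD(2)[OF d0] by simp
    then show "eventually (\<lambda>n. \<forall>x\<in>S. dist (u_sol \<alpha> (fn n) x) (u_sol \<alpha> f x) < e) sequentially"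
    proof eventually_elim
      case (elim n)
      show ?case
      proof
        fix x assume "x \<in> S"
        then have "\<bar>u_sol \<alpha> (fn n) x - u_sol \<alpha> f x\<bar> \<le> d n" by (rule close)
        then show "dist (u_sol \<alpha> (fn n) x) (u_sol \<alpha> f x) < e" using elim by (simp add: dist_real_def)
      qed
    qed
  qed
  have oscb: "\<bar>osc (u_sol \<alpha> (fn n)) - osc (u_sol \<alpha> f)\<bar> \<le> 2 * d n" for n
  proof -
    have "\<bar>Sup (u_sol \<alpha> (fn n) ` S) - Sup (u_sol \<alpha> f ` S)\<bar> \<le> d n"
      by (rule sup_close[OF Sne bdd(1) close])
    moreover have "\<bar>Inf (u_sol \<alpha> (fn n) ` S) - Inf (u_sol \<alpha> f ` S)\<bar> \<le> d n"
      by (rule inf_close[OF Sne bdd(2) close])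
    ultimately show ?thesis unfolding osc_def S_def[symmetric] by linarith
  qed
  have "(\<lambda>k. osc (u_sol \<alpha> (fn k))) \<longlonglongrightarrow> osc (u_sol \<alpha> f)"
  proof (rule tendsto_sandwich[where f="\<lambda>n. osc (u_sol \<alpha> f) - 2 * d n" and h="\<lambda>n. osc (u_sol \<alpha> f) + 2 * d n"])
    show "eventually (\<lambda>n. osc (u_sol \<alpha> f) - 2 * d n \<le> osc (u_sol \<alpha> (fn n))) sequentially"
    proof (intro always_eventually allI)
      fix n show "osc (u_sol \<alpha> f) - 2 * d n \<le> osc (u_sol \<alpha> (fn n))" using oscb[of n] by (simp add: abs_le_iff)
    qed
    show "eventually (\<lambda>n. osc (u_sol \<alpha> (fn n)) \<le> osc (u_sol \<alpha> f) + 2 * d n) sequentially"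
    proof (intro always_eventually allI)
      fix n show "osc (u_sol \<alpha> (fn n)) \<le> osc (u_sol \<alpha> f) + 2 * d n" using oscb[of n] by (simp add: abs_le_iff)
    qed
    show "(\<lambda>n. osc (u_sol \<alpha> f) - 2 * d n) \<longlonglongrightarrow> osc (u_sol \<alpha> f)"
      using tendsto_diff[OF tendsto_const tendsto_mult_left[OF d0, of 2]] by simp
    show "(\<lambda>n. osc (u_sol \<alpha> f) + 2 * d n) \<longlonglongrightarrow> osc (u_sol \<alpha> f)"
      using tendsto_add[OF tendsto_const tendsto_mult_left[OF d0, of 2]] by simp
  qed
  then have "strict_mono (\<lambda>k::nat. k) \<and> (\<lambda>k. osc (u_sol \<alpha> (fn k))) \<longlonglongrightarrow> osc (u_sol \<alpha> f)"
    by (simp add: strict_mono_def)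
  then show ?thesis using unif unfolding S_def by blast
qed

end
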